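(* For every positive integer $n$, $$\sum_{k=1}^{n}N^p_{bin}(k)\,s(n-k)=\vartheta_2(n)+1,$$ where $s(0)=1$ and $s(m)=(-1)^{h(m)}$ for $m\ge1$.
   Context: A binary partition of $m$ is a partition of $m$ all of whose parts are powers of $2$ (including $2^0=1$). $N^p_{bin}(m)$ is the total number of parts, summed over all binary partitions of $m$. $h(m)$ is the number of ones in the binary representation of $m$. $\vartheta_2(n)$ is the $2$-adic valuation of $n$. *)

theory Defs
  imports Main "HOL-Library.Multiset" "HOL-Computational_Algebra.Primes"
begin

definition bin_partitions :: "nat \<Rightarrow> nat multiset set" where
  "bin_partitions m = {P. (\<forall>x\<in>#P. \<exists>i. x = 2 ^ i) \<and> sum_mset P = m}"

definition N_bin :: "nat \<Rightarrow> nat" where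
  "N_bin m = (\<Sum>P\<in>bin_partitions m. size P)"

definition h :: "nat \<Rightarrow> nat" where
  "h m = card {i. bit m i}"

definition s :: "nat \<Rightarrow> int" where
  "s m = (if m = 0 then 1 else (-1) ^ h m)"

end

theory Submission
  imports Defs "HOL-Computational_Algebra.Formal_Power_Series"
begin

lemma bit_set_finite: "finite {i. bit (m::nat) i}"
proof (rule finite_subset[of _ "{..<m}"])
  show "{i. bit m i} \<subseteq> {..<m}"
  proof
    fix i assume "i \<in> {i. bit m i}"
    hence b: "bit m i" by simp
    show "i \<in> {..<m}"
    proof (rule ccontr)
      assume "i \<notin> {..<m}"
      hence "m \<le> i" by simp
      hence "m < 2^i" using less_exp[of i] by linarith
      hence "m div 2^i = 0" by simp
      thus False using b by (simp add: bit_iff_odd)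
    qed
  qed
qed auto

lemma bit_set_rec: "{i. bit (m::nat) i} = (if odd m then insert 0 else id) (Suc ` {i. bit (m div 2) i})"
proof -
  have "{i. bit m i} = (if odd m then {0} else {}) \<union> Suc ` {i. bit (m div 2) i}"
    apply (auto simp: bit_0 bit_Suc)
    by (metis bit_0 bit_Suc not0_implies_Suc image_iff mem_Collect_eq)+
  thus ?thesis by auto
qed

lemma h_rec: "h m = (if odd m then 1 else 0) + h (m div 2)"
proof -
  have c: "card (Suc ` {i. bit (m div 2) i}) = h (m div 2)"
    unfolding h_def by (simp add: card_image)
  show ?thesis
    using c bit_set_finite[of "m div 2"] unfolding h_def
    by (subst bit_set_rec) (auto simp: card_insert_if)
qed

lemma s_eq: "s m = (-1) ^ h m"
  by (simp add: s_def h_def)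

lemma s_even: "s (2*m) = s m"
  using h_rec[of "2*m"] by (simp add: s_eq)

lemma s_odd: "s (Suc (2*m)) = - s m"
  using h_rec[of "Suc (2*m)"] by (simp add: s_eq)

definition bb :: "nat \<Rightarrow> nat" where "bb m = card (bin_partitions m)"

lemma elem_le_sum: "(x::nat) \<in># P \<Longrightarrow> x \<le> sum_mset P"
proof -
  assume "x \<in># P"
  then obtain P' where "P = add_mset x P'" by (blast dest: multi_member_split)
  thus ?thesis by simp
qed

lemma size_le_sum: "(\<And>x. x \<in># P \<Longrightarrow> (1::nat) \<le> x) \<Longrightarrow> size P \<le> sum_mset P"
proof -
  assume a: "\<And>x. x \<in># P \<Longrightarrow> (1::nat) \<le> x"
  have "size P = sum_mset (image_mset (\<lambda>_. 1::nat) P)" by (rule size_eq_sum_mset)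
  also have "\<dots> \<le> sum_mset (image_mset (\<lambda>x. x) P)" by (rule sum_mset_mono) (rule a)
  finally show ?thesis by simp
qed

lemma bp_pos: "P \<in> bin_partitions m \<Longrightarrow> x \<in># P \<Longrightarrow> 1 \<le> x"
  unfolding bin_partitions_def using one_le_power[of "2::nat"] by force

lemma bp_le: "P \<in> bin_partitions m \<Longrightarrow> x \<in># P \<Longrightarrow> x \<le> m"
  unfolding bin_partitions_def using elem_le_sum[of x P] by simp

lemma bp_size: "P \<in> bin_partitions m \<Longrightarrow> size P \<le> m"
proof -
  assume P: "P \<in> bin_partitions m"
  have "size P \<le> sum_mset P" by (rule size_le_sum) (rule bp_pos[OF P])
  thus ?thesis using P unfolding bin_partitions_def by simp
qed

lemma finite_bp: "finite (bin_partitions m)"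
proof (rule finite_subset)
  show "bin_partitions m \<subseteq> (\<Union>k\<le>m. multisets_of_size {..m} k)"
    using bp_le bp_size unfolding multisets_of_size_def by fastforce
qed auto

lemma bb0: "bb 0 = 1"
proof -
  have "bin_partitions 0 = {{#}}"
  proof safe
    fix P assume P: "P \<in> bin_partitions 0"
    show "P = {#}"
    proof (rule ccontr)
      assume "P \<noteq> {#}"
      then obtain x where x: "x \<in># P" by blast
      show False using bp_pos[OF P x] bp_le[OF P x] by simp
    qed
  next
    show "{#} \<in> bin_partitions 0" by (simp add: bin_partitions_def)
  qed
  thus ?thesis unfolding bb_def by (metis One_nat_def card.empty card.insert empty_iff finite.emptyI)
qed

lemma bp_one: "n \<ge> 1 \<Longrightarrow> card {P \<in> bin_partitions n. 1 \<in># P} = bb (n - 1)"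
proof -
  assume n: "n \<ge> 1"
  have "{P \<in> bin_partitions n. 1 \<in># P} = add_mset 1 ` bin_partitions (n - 1)"
  proof safe
    fix P assume P: "P \<in> bin_partitions n" "1 \<in># P"
    hence "P = add_mset 1 (P - {#1#})" by simp
    moreover have "P - {#1#} \<in> bin_partitions (n - 1)"
    proof -
      have "sum_mset (P - {#1#}) = sum_mset P - 1" using P(2) by (simp add: sum_mset_diff)
      moreover have "\<forall>x\<in>#P - {#1#}. \<exists>i. x = 2 ^ i" using P(1) unfolding bin_partitions_def
        by (blast dest: in_diffD)
      ultimately show ?thesis using P(1) unfolding bin_partitions_def by simp
    qed
    ultimately show "P \<in> add_mset 1 ` bin_partitions (n - 1)" by blast
  next
    fix Q assume Q: "Q \<in> bin_partitions (n - 1)"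
    have "\<forall>x\<in>#add_mset 1 Q. \<exists>i. x = 2 ^ i" using Q unfolding bin_partitions_def
      by (auto intro: exI[of _ 0])
    moreover have "sum_mset (add_mset 1 Q) = n" using Q n unfolding bin_partitions_def by simp
    ultimately show "add_mset 1 Q \<in> bin_partitions n" unfolding bin_partitions_def by simp
  qed auto
  moreover have "inj_on (add_mset 1) (bin_partitions (n - 1))" by (auto intro: inj_onI)
  ultimately show ?thesis by (simp add: bb_def card_image)
qed

lemma bp_noone_even: "P \<in> bin_partitions n \<Longrightarrow> 1 \<notin># P \<Longrightarrow> x \<in># P \<Longrightarrow> even x"
proof -
  assume P: "P \<in> bin_partitions n" and n1: "1 \<notin># P" and x: "x \<in># P"
  then obtain i where i: "x = 2 ^ i" unfolding bin_partitions_def by auto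
  have "i \<noteq> 0"
  proof
    assume "i = 0" hence "x = 1" using i by simp
    thus False using n1 x by simp
  qed
  then obtain j where "i = Suc j" using not0_implies_Suc by blast
  thus "even x" using i by simp
qed

lemma double_half: "(\<And>x. x \<in># P \<Longrightarrow> even (x::nat)) \<Longrightarrow> image_mset ((*) 2) (image_mset (\<lambda>x. x div 2) P) = P"
  by (induction P) auto

lemma sum_mset_times: "sum_mset (image_mset ((*) (c::nat)) Q) = c * sum_mset Q"
  by (induction Q) (simp_all add: algebra_simps)

lemma bp_noone: "card {P \<in> bin_partitions n. 1 \<notin># P} = (if even n then bb (n div 2) else 0)"
proof -
  have sub: "{P \<in> bin_partitions n. 1 \<notin># P} \<subseteq> image_mset ((*) 2) ` bin_partitions (n div 2) \<and>
     (odd n \<longrightarrow> {P \<in> bin_partitions n. 1 \<notin># P} = {})"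
  proof -
    { fix P assume P: "P \<in> bin_partitions n" "1 \<notin># P"
      define Q where "Q = image_mset (\<lambda>x. x div 2) P"
      have PQ: "P = image_mset ((*) 2) Q" unfolding Q_def using double_half bp_noone_even[OF P] by metis
      have sP: "sum_mset P = n" using P unfolding bin_partitions_def by auto
      have "sum_mset P = 2 * sum_mset Q" unfolding PQ by (rule sum_mset_times)
      hence en: "even n" and sQ: "sum_mset Q = n div 2" using sP by auto
      have "\<forall>x\<in>#Q. \<exists>i. x = 2 ^ i"
      proof
        fix y assume "y \<in># Q"
        then obtain x where x: "x \<in># P" "y = x div 2" unfolding Q_def by auto
        then obtain i where xi: "x = 2^i" using P unfolding bin_partitions_def by auto
        have "i \<noteq> 0"
        proof
          assume "i = 0" hence "x = 1" using xi by simp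
          thus False using P x by simp
        qed
        then obtain j where "i = Suc j" using not0_implies_Suc by blast
        hence "y = 2 ^ j" using x xi by simp
        thus "\<exists>i. y = 2 ^ i" by blast
      qed
      hence "Q \<in> bin_partitions (n div 2)" using sQ unfolding bin_partitions_def by auto
      hence "P \<in> image_mset ((*) 2) ` bin_partitions (n div 2) \<and> even n" using PQ en by blast }
    thus ?thesis by blast
  qed
  show ?thesis
  proof (cases "even n")
    case True
    have "image_mset ((*) 2) ` bin_partitions (n div 2) \<subseteq> {P \<in> bin_partitions n. 1 \<notin># P}"
    proof safe
      fix Q assume Q: "Q \<in> bin_partitions (n div 2)"
      have "\<forall>x\<in>#image_mset ((*) 2) Q. \<exists>i. x = 2 ^ i"
      proof
        fix x assume "x \<in># image_mset ((*) 2) Q"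
        then obtain y where y: "y \<in># Q" "x = 2 * y" by auto
        then obtain i where "y = 2 ^ i" using Q unfolding bin_partitions_def by auto
        hence "x = 2 ^ Suc i" using y by simp
        thus "\<exists>i. x = 2 ^ i" by blast
      qed
      moreover have "sum_mset (image_mset ((*) 2) Q) = n"
        using Q True unfolding bin_partitions_def by (simp add: sum_mset_times)
      ultimately show "image_mset ((*) 2) Q \<in> bin_partitions n" unfolding bin_partitions_def by simp
      show "1 \<in># image_mset ((*) 2) Q \<Longrightarrow> False" by auto
    qed
    hence eq: "{P \<in> bin_partitions n. 1 \<notin># P} = image_mset ((*) 2) ` bin_partitions (n div 2)" using sub by blast
    have "inj_on (image_mset ((*) (2::nat))) (bin_partitions (n div 2))"
      by (rule inj_on_inverseI[where g="image_mset (\<lambda>x. x div 2)"]) (simp add: multiset.map_comp o_def)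
    thus ?thesis using True eq by (simp add: bb_def card_image)
  next
    case False
    hence "{P \<in> bin_partitions n. 1 \<notin># P} = {}" using sub by blast
    thus ?thesis using False by (simp only: card.empty) simp
  qed
qed

lemma bb_rec: "n \<ge> 1 \<Longrightarrow> bb n = bb (n - 1) + (if even n then bb (n div 2) else 0)"
proof -
  assume n: "n \<ge> 1"
  have "bin_partitions n = {P \<in> bin_partitions n. 1 \<in># P} \<union> {P \<in> bin_partitions n. 1 \<notin># P}" by blast
  hence "bb n = card {P \<in> bin_partitions n. 1 \<in># P} + card {P \<in> bin_partitions n. 1 \<notin># P}"
    unfolding bb_def using finite_bp[of n] by (metis (no_types, lifting) card_Un_disjoint disjoint_iff finite_Un mem_Collect_eq)
  thus ?thesis using bp_one[OF n] bp_noone[of n] by simp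
qed


unbundle fps_syntax

definition sp :: "int fps \<Rightarrow> int fps" where
  "sp f = Abs_fps (\<lambda>n. if even n then f $ (n div 2) else 0)"

lemma sp_nth: "sp f $ n = (if even n then f $ (n div 2) else 0)"
  by (simp add: sp_def)

lemma sp_mult: "sp (f * g) = sp f * sp g"
proof (rule fps_ext)
  fix n
  show "sp (f * g) $ n = (sp f * sp g) $ n"
  proof (cases "even n")
    case False
    have "(sp f * sp g) $ n = (\<Sum>i=0..n. sp f $ i * sp g $ (n - i))" by (rule fps_mult_nth)
    also have "\<dots> = 0"
    proof (rule sum.neutral, safe)
      fix i assume "i \<in> {0..n}"
      hence "i \<le> n" by simp
      show "sp f $ i * sp g $ (n - i) = 0"
      proof (cases "even i")
        case True
        hence "odd (n - i)" using False \<open>i \<le> n\<close> by auto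
        thus ?thesis by (simp add: sp_nth)
      qed (simp add: sp_nth)
    qed
    finally show ?thesis using False by (simp add: sp_nth)
  next
    case True
    then obtain m where n: "n = 2 * m" by blast
    have "(sp f * sp g) $ n = (\<Sum>i=0..n. sp f $ i * sp g $ (n - i))" by (rule fps_mult_nth)
    also have "\<dots> = (\<Sum>i\<in>(\<lambda>j. 2 * j) ` {0..m}. sp f $ i * sp g $ (n - i))"
    proof (rule sum.mono_neutral_right)
      show "(\<lambda>j. 2 * j) ` {0..m} \<subseteq> {0..n}" using n by auto
      show "\<forall>i\<in>{0..n} - (\<lambda>j. 2 * j) ` {0..m}. sp f $ i * sp g $ (n - i) = 0"
      proof
        fix i assume i: "i \<in> {0..n} - (\<lambda>j. 2 * j) ` {0..m}"
        have "odd i"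
        proof
          assume "even i"
          then obtain j where "i = 2 * j" by blast
          thus False using i n by auto
        qed
        thus "sp f $ i * sp g $ (n - i) = 0" by (simp add: sp_nth)
      qed
    qed auto
    also have "\<dots> = (\<Sum>j=0..m. sp f $ (2 * j) * sp g $ (n - 2 * j))"
      by (subst sum.reindex) (auto intro: inj_onI)
    also have "\<dots> = (\<Sum>j=0..m. f $ j * g $ (m - j))"
    proof (rule sum.cong)
      fix j assume "j \<in> {0..m}"
      hence "n - 2 * j = 2 * (m - j)" using n by auto
      thus "sp f $ (2 * j) * sp g $ (n - 2 * j) = f $ j * g $ (m - j)" by (simp add: sp_nth)
    qed simp
    also have "\<dots> = (f * g) $ m" by (simp add: fps_mult_nth)
    finally show ?thesis using n by (simp add: sp_nth)
  qed
qed

lemma sp_fix: assumes "P = sp P" "P $ 0 = 1" shows "P = 1"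
proof (rule fps_ext)
  fix n show "P $ n = (1::int fps) $ n"
  proof (induction n rule: less_induct)
    case (less n)
    show ?case
    proof (cases "n = 0")
      case True thus ?thesis using assms(2) by simp
    next
      case False
      have "P $ n = sp P $ n" using assms(1) by simp
      also have "\<dots> = 0"
      proof (cases "even n")
        case True
        have "n div 2 < n" "n div 2 \<noteq> 0" using False True by auto
        thus ?thesis using less True by (simp add: sp_nth)
      qed (simp add: sp_nth)
      finally show ?thesis using False by simp
    qed
  qed
qed

definition Bf :: "int fps" where "Bf = Abs_fps (\<lambda>n. int (bb n))"
definition Sf :: "int fps" where "Sf = Abs_fps s"

lemma B1: "Bf * (1 - fps_X) = sp Bf"
proof (rule fps_ext)
  fix n
  have "Bf * (1 - fps_X) = Bf - fps_X * Bf" by (simp add: algebra_simps)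
  hence "(Bf * (1 - fps_X)) $ n = int (bb n) - (if n = 0 then 0 else int (bb (n - 1)))"
    by (simp add: Bf_def)
  also have "\<dots> = sp Bf $ n"
  proof (cases "n = 0")
    case True thus ?thesis by (simp add: sp_nth Bf_def)
  next
    case False thus ?thesis using bb_rec[of n] by (simp add: sp_nth Bf_def)
  qed
  finally show "(Bf * (1 - fps_X)) $ n = sp Bf $ n" .
qed

lemma S1: "Sf = (1 - fps_X) * sp Sf"
proof (rule fps_ext)
  fix n
  have "(1 - fps_X) * sp Sf = sp Sf - fps_X * sp Sf" by (simp add: algebra_simps)
  hence "((1 - fps_X) * sp Sf) $ n = sp Sf $ n - (if n = 0 then 0 else sp Sf $ (n - 1))"
    by simp
  also have "\<dots> = s n"
  proof (cases "even n")
    case True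
    then obtain m where n: "n = 2 * m" by blast
    show ?thesis
    proof (cases "m = 0")
      case True thus ?thesis using n by (simp add: sp_nth Sf_def)
    next
      case False
      hence "odd (n - 1)" using n by simp
      thus ?thesis using n False s_even[of m] by (simp add: sp_nth Sf_def)
    qed
  next
    case False
    then obtain m where n: "n = Suc (2 * m)" using oddE by (metis Suc_eq_plus1)
    thus ?thesis using s_odd[of m] by (simp add: sp_nth Sf_def)
  qed
  finally show "Sf $ n = ((1 - fps_X) * sp Sf) $ n" by (simp add: Sf_def)
qed

lemma BS: "Bf * Sf = 1"
proof (rule sp_fix)
  have "Bf * Sf = (Bf * (1 - fps_X)) * sp Sf" by (subst S1) (simp add: mult.assoc)
  also have "\<dots> = sp (Bf * Sf)" by (simp add: B1 sp_mult)
  finally show "Bf * Sf = sp (Bf * Sf)" .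
  show "(Bf * Sf) $ 0 = 1" by (simp add: Bf_def Sf_def bb0 s_def)
qed


lemma rep_sub_iff: "replicate_mset j x \<subseteq># P \<longleftrightarrow> j \<le> count P x"
  by (auto simp: subseteq_mset_def)

lemma card_count_ge:
  "card {P \<in> bin_partitions m. j \<le> count P (2^i)} = (if j * 2^i \<le> m then bb (m - j * 2^i) else 0)"
proof -
  define R :: "nat multiset" where "R = replicate_mset j (2^i)"
  have sR: "sum_mset R = j * 2^i" unfolding R_def by simp
  have eqset: "{P \<in> bin_partitions m. j \<le> count P (2^i)} = {P \<in> bin_partitions m. R \<subseteq># P}"
    unfolding R_def rep_sub_iff by simp
  show ?thesis
  proof (cases "j * 2^i \<le> m")
    case False
    have "{P \<in> bin_partitions m. R \<subseteq># P} = {}"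
    proof safe
      fix P assume P: "P \<in> bin_partitions m" "R \<subseteq># P"
      hence "P = R + (P - R)" by simp
      hence "sum_mset P = sum_mset R + sum_mset (P - R)" by (metis sum_mset.union)
      hence "j * 2^i \<le> m" using P sR unfolding bin_partitions_def by simp
      thus "P \<in> {}" using False by simp
    qed
    thus ?thesis using eqset False by (simp only: card.empty) simp
  next
    case True
    have img: "{P \<in> bin_partitions m. R \<subseteq># P} = (\<lambda>Q. Q + R) ` bin_partitions (m - j * 2^i)"
    proof safe
      fix P assume P: "P \<in> bin_partitions m" "R \<subseteq># P"
      hence PR: "P = (P - R) + R" by simp
      have "sum_mset (P - R) = m - j * 2^i" using P sR unfolding bin_partitions_def by (simp add: sum_mset_diff)
      moreover have "\<forall>x\<in>#P - R. \<exists>i. x = 2 ^ i" using P(1) unfolding bin_partitions_def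
        by (blast dest: in_diffD)
      ultimately have "P - R \<in> bin_partitions (m - j * 2^i)" unfolding bin_partitions_def by simp
      thus "P \<in> (\<lambda>Q. Q + R) ` bin_partitions (m - j * 2^i)" using PR by blast
    next
      fix Q assume Q: "Q \<in> bin_partitions (m - j * 2^i)"
      have "\<forall>x\<in>#Q + R. \<exists>i. x = 2 ^ i"
      proof
        fix x assume "x \<in># Q + R"
        hence "x \<in># Q \<or> x \<in># R" by simp
        thus "\<exists>i. x = 2 ^ i"
        proof
          assume "x \<in># Q" thus ?thesis using Q unfolding bin_partitions_def by auto
        next
          assume "x \<in># R" hence "x = 2^i" unfolding R_def by (simp split: if_splits)
          thus ?thesis by blast
        qed
      qed
      moreover have "sum_mset (Q + R) = m" using Q sR True unfolding bin_partitions_def by simp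
      ultimately show "Q + R \<in> bin_partitions m" unfolding bin_partitions_def by simp
      show "R \<subseteq># Q + R" by simp
    qed
    have "inj_on (\<lambda>Q. Q + R) (bin_partitions (m - j * 2^i))" by (rule inj_onI) simp
    thus ?thesis using eqset img True by (simp add: bb_def card_image)
  qed
qed


lemma pow_le_self: "2 ^ k \<le> (m::nat) \<Longrightarrow> k \<le> m"
  using less_exp[of k] by linarith

lemma size_dec: "(\<forall>x\<in>#P. \<exists>i. x = 2 ^ i) \<Longrightarrow> (\<forall>x\<in>#P. x \<le> m) \<Longrightarrow>
   size P = (\<Sum>i\<le>m. count P (2^i))"
proof (induction P)
  case empty thus ?case by simp
next
  case (add x P)
  then obtain k where k: "x = 2 ^ k" by auto
  have "k \<le> m" using add.prems k pow_le_self by auto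
  have "(\<Sum>i\<le>m. count (add_mset x P) (2^i)) = (\<Sum>i\<le>m. count P (2^i) + (if k = i then 1 else 0))"
    by (rule sum.cong) (auto simp: k)
  also have "\<dots> = (\<Sum>i\<le>m. count P (2^i)) + 1"
    using \<open>k \<le> m\<close> by (simp add: sum.distrib)
  finally show ?case using add by simp
qed

lemma count_as_sum: "(c::nat) \<le> m \<Longrightarrow> c = (\<Sum>j\<in>{1..m}. if j \<le> c then 1 else 0)"
proof -
  assume c: "c \<le> m"
  have "(\<Sum>j\<in>{1..m}. if j \<le> c then 1 else 0) = card {j \<in> {1..m}. j \<le> c}"
    by (simp add: sum.inter_filter[symmetric])
  also have "{j \<in> {1..m}. j \<le> c} = {1..c}" using c by auto
  finally show ?thesis by simp
qed

lemma fiber: assumes "1 \<le> t" "t \<le> m"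
  shows "card {x \<in> {..m} \<times> {1..m}. snd x * 2 ^ fst x = t} = multiplicity 2 t + 1"
proof -
  have dv: "2 ^ i dvd t \<longleftrightarrow> i \<le> multiplicity 2 t" for i
    using power_dvd_iff_le_multiplicity[of t "2::nat" i] assms by simp
  have "{x \<in> {..m} \<times> {1..m}. snd x * 2 ^ fst x = t} = (\<lambda>i. (i, t div 2^i)) ` {..multiplicity 2 t}"
  proof (rule subset_antisym; rule subsetI)
    fix x assume x: "x \<in> {x \<in> {..m} \<times> {1..m}. snd x * 2 ^ fst x = t}"
    obtain i j where xij: "x = (i, j)" by (cases x)
    have ij: "j * 2 ^ i = t" using x xij by simp
    hence "2 ^ i dvd t" by (metis dvd_triv_right)
    hence "i \<le> multiplicity 2 t" using dv by simp
    moreover have "j = t div 2 ^ i" using ij by auto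
    ultimately show "x \<in> (\<lambda>i. (i, t div 2 ^ i)) ` {..multiplicity 2 t}" using xij by auto
  next
    fix x assume "x \<in> (\<lambda>i. (i, t div 2 ^ i)) ` {..multiplicity 2 t}"
    then obtain i where i: "i \<le> multiplicity 2 t" and xi: "x = (i, t div 2 ^ i)" by auto
    hence d: "2 ^ i dvd t" using dv by simp
    hence le: "2 ^ i \<le> t" using assms by (simp add: dvd_imp_le)
    have "i \<le> m" using pow_le_self[of i m] le assms by simp
    moreover have "1 \<le> t div 2 ^ i" using le div_greater_zero_iff[of t "2^i"] by simp
    moreover have "t div 2 ^ i \<le> m" using assms div_le_dividend[of t "2^i"] by linarith
    moreover have "t div 2 ^ i * 2 ^ i = t" using d by simp
    ultimately show "x \<in> {x \<in> {..m} \<times> {1..m}. snd x * 2 ^ fst x = t}" using xi by simp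
  qed
  moreover have "inj_on (\<lambda>i. (i, t div 2^i)) {..multiplicity 2 t}" by (rule inj_onI) simp
  ultimately show ?thesis by (simp add: card_image)
qed

lemma N_formula: "N_bin m = (\<Sum>t\<in>{1..m}. (multiplicity 2 t + 1) * bb (m - t))"
proof -
  let ?B = "bin_partitions m"
  let ?A = "{..m} \<times> {1..m}"
  have "N_bin m = (\<Sum>P\<in>?B. \<Sum>i\<le>m. \<Sum>j\<in>{1..m}. if j \<le> count P (2^i) then 1 else 0)"
    unfolding N_bin_def
  proof (rule sum.cong[OF refl])
    fix P assume P: "P \<in> ?B"
    have "size P = (\<Sum>i\<le>m. count P (2^i))"
    proof (rule size_dec)
      show "\<forall>x\<in>#P. \<exists>i. x = 2 ^ i" using P unfolding bin_partitions_def by simp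
      show "\<forall>x\<in>#P. x \<le> m" using bp_le[OF P] by blast
    qed
    also have "\<dots> = (\<Sum>i\<le>m. \<Sum>j\<in>{1..m}. if j \<le> count P (2^i) then 1 else 0)"
    proof (rule sum.cong[OF refl])
      fix i
      have "count P (2^i) \<le> m" using count_le_size[of P "2^i"] bp_size[OF P] by linarith
      thus "count P (2^i) = (\<Sum>j\<in>{1..m}. if j \<le> count P (2^i) then 1 else 0)"
        by (rule count_as_sum)
    qed
    finally show "size P = (\<Sum>i\<le>m. \<Sum>j\<in>{1..m}. if j \<le> count P (2^i) then 1 else 0)" .
  qed
  also have "\<dots> = (\<Sum>i\<le>m. \<Sum>j\<in>{1..m}. \<Sum>P\<in>?B. if j \<le> count P (2^i) then 1 else 0)"
    by (simp add: sum.swap[of _ ?B] sum.swap[of _ ?B "{1..m}"])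
  also have "\<dots> = (\<Sum>i\<le>m. \<Sum>j\<in>{1..m}. card {P \<in> ?B. j \<le> count P (2^i)})"
    by (simp add: sum.inter_filter[symmetric] finite_bp)
  also have "\<dots> = (\<Sum>i\<le>m. \<Sum>j\<in>{1..m}. \<Sum>t\<in>{1..m}. if j * 2^i = t then bb (m - t) else 0)"
  proof (intro sum.cong[OF refl])
    fix i j assume "j \<in> {1..m}"
    hence "1 \<le> j * 2^i" by simp
    thus "card {P \<in> ?B. j \<le> count P (2^i)} = (\<Sum>t\<in>{1..m}. if j * 2^i = t then bb (m - t) else 0)"
      by (simp add: card_count_ge)
  qed
  also have "\<dots> = (\<Sum>t\<in>{1..m}. \<Sum>x\<in>?A. if snd x * 2^fst x = t then bb (m - t) else 0)"
  proof -
    have cp: "(\<Sum>i\<le>m. \<Sum>j\<in>{1..m}. G i j) = (\<Sum>x\<in>?A. G (fst x) (snd x))" for G :: "nat \<Rightarrow> nat \<Rightarrow> nat"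
      by (simp add: sum.cartesian_product case_prod_beta)
    show ?thesis unfolding cp by (rule sum.swap)
  qed
  also have "\<dots> = (\<Sum>t\<in>{1..m}. (multiplicity 2 t + 1) * bb (m - t))"
  proof (rule sum.cong[OF refl])
    fix t assume t: "t \<in> {1..m}"
    have "(\<Sum>x\<in>?A. if snd x * 2^fst x = t then bb (m - t) else 0) = card {x \<in> ?A. snd x * 2 ^ fst x = t} * bb (m - t)"
      by (simp add: sum.inter_filter[symmetric])
    thus "(\<Sum>x\<in>?A. if snd x * 2^fst x = t then bb (m - t) else 0) = (multiplicity 2 t + 1) * bb (m - t)"
      using fiber[of t m] t by simp
  qed
  finally show ?thesis .
qed


definition Cf :: "int fps" where "Cf = Abs_fps (\<lambda>t. if t = 0 then 0 else int (multiplicity 2 t) + 1)"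
definition Nf :: "int fps" where "Nf = Abs_fps (\<lambda>m. int (N_bin m))"

lemma N0: "N_bin 0 = 0" using N_formula[of 0] by simp

lemma NCB: "Nf = Cf * Bf"
proof (rule fps_ext)
  fix m
  have "(Cf * Bf) $ m = (\<Sum>i=0..m. Cf $ i * Bf $ (m - i))" by (rule fps_mult_nth)
  also have "\<dots> = Cf $ 0 * Bf $ m + (\<Sum>i=Suc 0..m. Cf $ i * Bf $ (m - i))"
    by (subst sum.atLeast_Suc_atMost) simp_all
  also have "\<dots> = (\<Sum>i=1..m. (int (multiplicity 2 i) + 1) * int (bb (m - i)))"
    by (simp add: Cf_def Bf_def)
  also have "\<dots> = int (N_bin m)" unfolding N_formula by (simp add: algebra_simps)
  finally show "Nf $ m = (Cf * Bf) $ m" by (simp add: Nf_def)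
qed

theorem corollary8:
  fixes n :: nat
  assumes "n \<ge> 1"
  shows "(\<Sum>k=1..n. int (N_bin k) * s (n - k)) = int (multiplicity (2::nat) n) + 1"
proof -
  have "Nf * Sf = Cf" unfolding NCB by (simp add: mult.assoc BS)
  hence "(Nf * Sf) $ n = Cf $ n" by simp
  moreover have "(Nf * Sf) $ n = (\<Sum>k=0..n. int (N_bin k) * s (n - k))"
    by (simp add: fps_mult_nth Nf_def Sf_def)
  moreover have "(\<Sum>k=0..n. int (N_bin k) * s (n - k)) = (\<Sum>k=1..n. int (N_bin k) * s (n - k))"
    by (subst sum.atLeast_Suc_atMost) (simp_all add: N0)
  ultimately show ?thesis using assms by (simp add: Cf_def)
qed

end
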